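(* Let $(\xi_n)_{n\geq1}$ be i.i.d. with $\mathbf{P}(\xi_1=1)=p=1-\mathbf{P}(\xi_1=-1)$, $p\in(0,1)$. For $x\geq1$ set $W_0:=x$, $B_1:=1$, $W_n:=W_{n-1}+\xi_nB_n$, $B_{n+1}:=B_n2^{\xi_n}$ for $n\geq1$, and $f(x,p):=\mathbf{P}(W_n\leq0\text{ for some }n)$. There exist positive constants $C$ and $\beta$ such that for all $p\in(0,1/2)$, $x\geq2$ and $h>0$, $$0<f(x,p)-f(x+h,p)\leq\frac{C}{(1-2p)^2}\left(h^{\beta p^2}+h^{\beta(1-2p)^3}\right).$$ Moreover, for every $p\in(0,1/2)$, $$\lim_{x\to2^+}\frac{\log\big(f(2,p)-f(x,p)\big)}{\log(x-2)}=\log_{1/2}(1-p).$$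
   Context: $f(x,p)$ is the ruin probability of a gambler with initial fortune $x$ who starts by betting $1$, doubles the bet after each win and halves it after each loss, winning each round independently with probability $p$. *)

theory Defs
  imports "HOL-Probability.Probability"
begin

text \<open>Outcome stream: omega !! (n-1) = True means xi_n = 1 (a win), False means xi_n = -1.
  wb x omega n = (W_n, B_{n+1}).\<close>
fun wb :: "real \<Rightarrow> bool stream \<Rightarrow> nat \<Rightarrow> real \<times> real" where
  "wb x \<omega> 0 = (x, 1)"
| "wb x \<omega> (Suc n) = (let (w, b) = wb x \<omega> n in
      if \<omega> !! n then (w + b, 2 * b) else (w - b, b / 2))"

definition W :: "real \<Rightarrow> bool stream \<Rightarrow> nat \<Rightarrow> real" where
  "W x \<omega> n = fst (wb x \<omega> n)"

definition coins :: "real \<Rightarrow> bool stream measure" where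
  "coins p = stream_space (measure_pmf (bernoulli_pmf p))"

definition ruin :: "real \<Rightarrow> real \<Rightarrow> real" where
  "ruin x p = measure (coins p) {\<omega> \<in> space (coins p). \<exists>n. W x \<omega> n \<le> 0}"

end

theory Submission
  imports Defs
begin


lemma wb_shift: "wb (x + h) \<omega> n = (fst (wb x \<omega> n) + h, snd (wb x \<omega> n))"
  by (induction n) (auto simp: Let_def split: prod.splits)

lemma W_shift: "W (x + h) \<omega> n = W x \<omega> n + h"
  by (simp add: W_def wb_shift)

lemma wb_Cons: "wb x (c ## \<omega>) (Suc n) =
   (let l = (if c then 2 else 1/2 :: real) in
     (l * fst (wb (if c then (x+1)/2 else 2*x-2) \<omega> n), l * snd (wb (if c then (x+1)/2 else 2*x-2) \<omega> n)))"
proof (induction n)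
  case 0
  then show ?case by (auto simp: field_simps)
next
  case (Suc n)
  obtain w b where wb: "wb (if c then (x+1)/2 else 2*x-2) \<omega> n = (w, b)" by (cases "wb (if c then (x+1)/2 else 2*x-2) \<omega> n")
  have "wb x (c ## \<omega>) (Suc (Suc n)) = (let (w, b) = wb x (c ## \<omega>) (Suc n) in
      if \<omega> !! n then (w + b, 2 * b) else (w - b, b / 2))" by simp
  also have "\<dots> = (let l = (if c then 2 else 1/2 :: real) in
      if \<omega> !! n then (l*w + l*b, 2 * (l*b)) else (l*w - l*b, (l*b) / 2))"
    using Suc wb by (simp add: Let_def)
  also have "\<dots> = (let l = (if c then 2 else 1/2 :: real) in
     (l * fst (wb (if c then (x+1)/2 else 2*x-2) \<omega> (Suc n)), l * snd (wb (if c then (x+1)/2 else 2*x-2) \<omega> (Suc n))))"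
    using wb by (auto simp: Let_def algebra_simps)
  finally show ?case .
qed

lemma W_Cons: "W x (c ## \<omega>) (Suc n) = (if c then 2 else 1/2) * W (if c then (x+1)/2 else 2*x-2) \<omega> n"
  unfolding W_def wb_Cons by (simp add: Let_def)

lemma wb_prefix: "(\<forall>i<n. \<omega> !! i = \<omega>' !! i) \<Longrightarrow> wb x \<omega> n = wb x \<omega>' n"
  by (induction n) (auto simp: Let_def)

lemma W_stake: "W x \<omega> n = W x (stake n \<omega> @- sconst False) n"
  unfolding W_def by (rule arg_cong[where f=fst], rule wb_prefix) auto

lemma sets_coins: "sets (coins p) = sets (stream_space (count_space UNIV))"
  unfolding coins_def by (rule sets_stream_space_cong) simp

lemma measurable_W_le[measurable]: "Measurable.pred (coins p) (\<lambda>\<omega>. W x \<omega> n \<le> 0)"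
proof -
  have "(\<lambda>\<omega>. W x (stake n \<omega> @- sconst False) n \<le> 0) \<in> measurable (stream_space (count_space UNIV)) (count_space UNIV)"
    by (rule measurable_compose[OF measurable_stake]) simp
  then show ?thesis
    by (subst W_stake) (simp add: measurable_cong_sets[OF sets_coins refl])
qed

lemma prob_coins: "prob_space (coins p)"
  unfolding coins_def by (rule prob_space.prob_space_stream_space) (rule prob_space_measure_pmf)

lemma space_coins: "space (coins p) = UNIV"
  by (simp add: coins_def space_stream_space streams_UNIV)

definition ruinN :: "real \<Rightarrow> real \<Rightarrow> nat \<Rightarrow> real" where
  "ruinN x p N = measure (coins p) {\<omega> \<in> space (coins p). \<exists>n\<le>N. W x \<omega> n \<le> 0}"

lemma ruinN_0: "ruinN x p 0 = (if x \<le> 0 then 1 else 0)"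
proof -
  interpret prob_space "coins p" by (rule prob_coins)
  show ?thesis unfolding ruinN_def by (simp add: W_def prob_space)
qed

lemma ruinN_bounds: "0 \<le> ruinN x p N" "ruinN x p N \<le> 1"
proof -
  interpret prob_space "coins p" by (rule prob_coins)
  show "0 \<le> ruinN x p N" "ruinN x p N \<le> 1" unfolding ruinN_def by auto
qed

lemma ruin_bounds: "0 \<le> ruin x p" "ruin x p \<le> 1"
proof -
  interpret prob_space "coins p" by (rule prob_coins)
  show "0 \<le> ruin x p" "ruin x p \<le> 1" unfolding ruin_def by auto
qed

lemma ruinN_lim: "(\<lambda>N. ruinN x p N) \<longlonglongrightarrow> ruin x p"
proof -
  interpret prob_space "coins p" by (rule prob_coins)
  have "(\<lambda>N. measure (coins p) {\<omega> \<in> space (coins p). \<exists>n\<le>N. W x \<omega> n \<le> 0}) \<longlonglongrightarrow>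
     measure (coins p) (\<Union>N. {\<omega> \<in> space (coins p). \<exists>n\<le>N. W x \<omega> n \<le> 0})"
    by (rule finite_Lim_measure_incseq) (auto simp: incseq_def, metis le_trans)
  moreover have "(\<Union>N. {\<omega> \<in> space (coins p). \<exists>n\<le>N. W x \<omega> n \<le> 0}) = {\<omega> \<in> space (coins p). \<exists>n. W x \<omega> n \<le> 0}"
    by auto
  ultimately show ?thesis unfolding ruinN_def ruin_def by simp
qed

lemma ruin_le: "x \<le> y \<Longrightarrow> ruin y p \<le> ruin x p"
proof -
  assume "x \<le> y"
  interpret prob_space "coins p" by (rule prob_coins)
  have "{\<omega> \<in> space (coins p). \<exists>n. W y \<omega> n \<le> 0} \<subseteq> {\<omega> \<in> space (coins p). \<exists>n. W x \<omega> n \<le> 0}"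
  proof (intro subsetI)
    fix \<omega> assume "\<omega> \<in> {\<omega> \<in> space (coins p). \<exists>n. W y \<omega> n \<le> 0}"
    then obtain n where "\<omega> \<in> space (coins p)" "W y \<omega> n \<le> 0" by auto
    moreover have "W y \<omega> n = W x \<omega> n + (y - x)" using W_shift[of x "y-x"] by simp
    ultimately show "\<omega> \<in> {\<omega> \<in> space (coins p). \<exists>n. W x \<omega> n \<le> 0}" using \<open>x \<le> y\<close> by (auto intro!: exI[of _ n])
  qed
  then show ?thesis unfolding ruin_def by (intro finite_measure_mono) auto
qed

lemma ruinN_Suc:
  assumes p: "0 < p" "p < 1"
  shows "ruinN x p (Suc N) = (if x \<le> 0 then 1 else p * ruinN ((x+1)/2) p N + (1-p) * ruinN (2*x-2) p N)"
proof (cases "x \<le> 0")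
  case True
  interpret prob_space "coins p" by (rule prob_coins)
  have "{\<omega> \<in> space (coins p). \<exists>n\<le>Suc N. W x \<omega> n \<le> 0} = space (coins p)"
    using True by (force simp: W_def)
  then show ?thesis using True unfolding ruinN_def by (simp add: prob_space)
next
  case False
  interpret S: prob_space "coins p" by (rule prob_coins)
  interpret B: prob_space "measure_pmf (bernoulli_pmf p)" by (rule prob_space_measure_pmf)
  let ?X = "{\<omega> \<in> space (coins p). \<exists>n\<le>Suc N. W x \<omega> n \<le> 0}"
  have eq: "{\<omega>\<in>space (coins p). t ## \<omega> \<in> ?X} =
      {\<omega> \<in> space (coins p). \<exists>n\<le>N. W (if t then (x+1)/2 else 2*x-2) \<omega> n \<le> 0}" for t
  proof -
    have "(\<exists>n\<le>Suc N. W x (t ## \<omega>) n \<le> 0) \<longleftrightarrow> (\<exists>n\<le>N. W x (t ## \<omega>) (Suc n) \<le> 0)" for \<omega>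
    proof
      assume "\<exists>n\<le>Suc N. W x (t ## \<omega>) n \<le> 0"
      then obtain n where n: "n \<le> Suc N" "W x (t ## \<omega>) n \<le> 0" by blast
      then show "\<exists>n\<le>N. W x (t ## \<omega>) (Suc n) \<le> 0"
        using False by (cases n) (auto simp: W_def)
    qed auto
    moreover have "W x (t ## \<omega>) (Suc n) \<le> 0 \<longleftrightarrow> W (if t then (x+1)/2 else 2*x-2) \<omega> n \<le> 0" for \<omega> n
      unfolding W_Cons by (simp add: mult_le_0_iff)
    ultimately show ?thesis by (auto simp: space_coins)
  qed
  have "ennreal (ruinN x p (Suc N)) = emeasure (coins p) ?X"
    unfolding ruinN_def by (simp add: S.emeasure_eq_measure)
  also have "\<dots> = (\<integral>\<^sup>+t. emeasure (coins p) {\<omega>\<in>space (coins p). t ## \<omega> \<in> ?X} \<partial>measure_pmf (bernoulli_pmf p))"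
    unfolding coins_def by (rule prob_space.emeasure_stream_space[OF prob_space_measure_pmf]) (simp add: coins_def[symmetric])
  also have "\<dots> = (\<integral>\<^sup>+t. ennreal (ruinN (if t then (x+1)/2 else 2*x-2) p N) \<partial>measure_pmf (bernoulli_pmf p))"
    unfolding eq ruinN_def by (simp add: S.emeasure_eq_measure)
  also have "\<dots> = ennreal (ruinN ((x+1)/2) p N) * p + ennreal (ruinN (2*x-2) p N) * (1 - p)"
    using p by simp
  also have "\<dots> = ennreal (p * ruinN ((x+1)/2) p N + (1-p) * ruinN (2*x-2) p N)"
    using p ruinN_bounds by (simp add: ennreal_mult' ennreal_plus mult.commute)
  finally show ?thesis using False ruinN_bounds p
    by (subst (asm) ennreal_inj) (auto intro!: add_nonneg_nonneg mult_nonneg_nonneg)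
qed


definition Lam :: "(real \<Rightarrow> real) \<Rightarrow> real set \<Rightarrow> real \<Rightarrow> real \<Rightarrow> real" where
  "Lam G T s l = (\<Sum>t\<in>T. G (s + t + l) - G (s + t))"

definition lat :: "nat \<Rightarrow> real set" where
  "lat j = {2 / 4^j * of_int k | k. True}"

definition sep :: "real set \<Rightarrow> real \<Rightarrow> bool" where
  "sep T l \<longleftrightarrow> (\<forall>a\<in>T. \<forall>b\<in>T. a \<noteq> b \<longrightarrow> l \<le> \<bar>a - b\<bar>)"

lemma sep_bound:
  assumes mono: "\<And>a b. a \<le> b \<Longrightarrow> G a \<le> G b" and "finite T"
  shows "sep T l \<longrightarrow> T \<noteq> {} \<longrightarrow> Lam G T s l \<le> G (s + Max T + l) - G (s + Min T)"
  using \<open>finite T\<close>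
proof (induction T rule: finite_linorder_max_induct)
  case empty
  then show ?case by simp
next
  case (insert b A)
  show ?case
  proof (intro impI)
    assume sep: "sep (insert b A) l"
    show "Lam G (insert b A) s l \<le> G (s + Max (insert b A) + l) - G (s + Min (insert b A))"
    proof (cases "A = {}")
      case True
      then show ?thesis by (simp add: Lam_def)
    next
      case False
      have bA: "b \<notin> A" using insert by auto
      have sepA: "sep A l" using sep unfolding sep_def by auto
      have maxA: "Max A \<in> A" "Max A < b" using False insert by auto
      have "l \<le> \<bar>b - Max A\<bar>" using sep maxA unfolding sep_def by auto
      then have ml: "Max A + l \<le> b" using maxA by auto
      have "Lam G (insert b A) s l = (G (s + b + l) - G (s + b)) + Lam G A s l"
        unfolding Lam_def using insert bA by simp
      also have "\<dots> \<le> (G (s + b + l) - G (s + b)) + (G (s + Max A + l) - G (s + Min A))"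
        using insert.IH sepA False by simp
      also have "\<dots> \<le> G (s + b + l) - G (s + Min A)"
        using mono[of "s + Max A + l" "s + b"] ml by simp
      also have "Max (insert b A) = b"
      proof -
        have "Max (insert b A) = max b (Max A)" using insert.hyps(1) False by simp
        then show ?thesis using maxA(2) by linarith
      qed
      moreover have "Min (insert b A) = Min A"
      proof -
        have "Min A \<le> Max A" using Min_le[OF insert.hyps(1) maxA(1)] .
        moreover have "Min (insert b A) = min b (Min A)" using insert.hyps(1) False by simp
        ultimately show ?thesis using maxA(2) by linarith
      qed
      ultimately show ?thesis by simp
    qed
  qed
qed

lemma sep_le1:
  assumes mono: "\<And>a b. a \<le> b \<Longrightarrow> G a \<le> G b" and G0: "\<And>x. 0 \<le> G x" and G1: "\<And>x. G x \<le> 1"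
    and "finite T" "sep T l"
  shows "Lam G T s l \<le> 1"
proof (cases "T = {}")
  case True then show ?thesis by (simp add: Lam_def)
next
  case False
  then have "Lam G T s l \<le> G (s + Max T + l) - G (s + Min T)"
    using sep_bound[OF mono \<open>finite T\<close>, where l=l and s=s] assms(5) False by simp
  also have "\<dots> \<le> 1" using G0[of "s + Min T"] G1[of "s + Max T + l"] by linarith
  finally show ?thesis .
qed

lemma lat_mult4_0: "T \<subseteq> lat 0 \<Longrightarrow> (\<lambda>t. 4 * t) ` T \<subseteq> lat 0"
proof
  fix x assume "T \<subseteq> lat 0" "x \<in> (\<lambda>t. 4 * t) ` T"
  then obtain k where "x = 4 * (2 * of_int k)" unfolding lat_def by auto
  then have "x = 2 / 4^0 * of_int (4 * k)" by simp
  then show "x \<in> lat 0" unfolding lat_def by blast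
qed

lemma lat_mult4_Suc: "T \<subseteq> lat (Suc j) \<Longrightarrow> (\<lambda>t. 4 * t) ` T \<subseteq> lat j"
proof
  fix x assume "T \<subseteq> lat (Suc j)" "x \<in> (\<lambda>t. 4 * t) ` T"
  then obtain k where "x = 4 * (2 / 4^(Suc j) * of_int k)" unfolding lat_def by auto
  then have "x = 2 / 4^j * of_int k" by simp
  then show "x \<in> lat j" unfolding lat_def by blast
qed

lemma lat_div4: "T \<subseteq> lat j \<Longrightarrow> (\<lambda>t. t / 4) ` T \<subseteq> lat (Suc j)"
proof
  fix x assume "T \<subseteq> lat j" "x \<in> (\<lambda>t. t / 4) ` T"
  then obtain k where "x = (2 / 4^j * of_int k) / 4" unfolding lat_def by auto
  then have "x = 2 / 4^(Suc j) * of_int k" by simp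
  then show "x \<in> lat (Suc j)" unfolding lat_def by blast
qed

lemma lat_double: "T \<subseteq> lat 0 \<Longrightarrow> T \<union> (\<lambda>t. t - 1/2) ` T \<subseteq> lat 1"
proof
  fix x assume T: "T \<subseteq> lat 0" and x: "x \<in> T \<union> (\<lambda>t. t - 1/2) ` T"
  show "x \<in> lat 1"
  proof (cases "x \<in> T")
    case True
    then obtain k where "x = 2 * of_int k" using T unfolding lat_def by auto
    then have "x = 2 / 4^1 * of_int (4 * k)" by simp
    then show ?thesis unfolding lat_def by blast
  next
    case False
    then obtain k where "x = 2 * of_int k - 1/2" using T x unfolding lat_def by auto
    then have "x = 2 / 4^1 * of_int (4 * k - 1)" by simp
    then show ?thesis unfolding lat_def by blast
  qed
qed

lemma lat0_cross:
  assumes "a \<in> lat 0" "b \<in> lat 0"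
  shows "1/2 \<le> \<bar>a - (b - 1/2)\<bar>"
proof -
  obtain k m where k: "a = 2 * of_int k" "b = 2 * of_int m" using assms unfolding lat_def by auto
  have eq: "a - (b - 1/2) = of_int (4 * (k - m) + 1) / 2" using k by simp
  have "1 \<le> \<bar>of_int (4 * (k - m) + 1) :: real\<bar>"
  proof -
    have "4 * (k - m) + 1 \<noteq> 0" by presburger
    then have "1 \<le> \<bar>4 * (k - m) + 1\<bar>" by linarith
    then show ?thesis by (metis of_int_1_le_iff of_int_abs)
  qed
  moreover have "\<bar>a - (b - 1/2)\<bar> = \<bar>of_int (4 * (k - m) + 1) :: real\<bar> / 2"
    unfolding eq by simp
  ultimately show ?thesis by (simp add: field_simps)
qed

lemma sep_scale: "sep T l \<Longrightarrow> 0 < c \<Longrightarrow> sep ((\<lambda>t. c * t) ` T) (c * l)"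
  unfolding sep_def by (auto simp: abs_mult right_diff_distrib[symmetric])

lemma sep_div4: "sep T l \<Longrightarrow> sep ((\<lambda>t. t / 4) ` T) (l / 4)"
  unfolding sep_def by (auto simp: diff_divide_distrib[symmetric])

lemma sep_double:
  assumes "sep T l" "T \<subseteq> lat 0" "l \<le> 1/2"
  shows "sep (T \<union> (\<lambda>t. t - 1/2) ` T) l"
  unfolding sep_def
proof (intro ballI impI)
  fix a b assume a: "a \<in> T \<union> (\<lambda>t. t - 1/2) ` T" and b: "b \<in> T \<union> (\<lambda>t. t - 1/2) ` T" and ab: "a \<noteq> b"
  show "l \<le> \<bar>a - b\<bar>"
  proof (cases "a \<in> T")
    case aT: True
    show ?thesis
    proof (cases "b \<in> T")
      case True then show ?thesis using aT ab assms(1) unfolding sep_def by auto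
    next
      case False
      then obtain b' where b': "b' \<in> T" "b = b' - 1/2" using b by auto
      have "1/2 \<le> \<bar>a - (b' - 1/2)\<bar>" using aT b' assms(2) by (intro lat0_cross) auto
      then show ?thesis using b' assms(3) by linarith
    qed
  next
    case aF: False
    then obtain a' where a': "a' \<in> T" "a = a' - 1/2" using a by auto
    show ?thesis
    proof (cases "b \<in> T")
      case True
      have "1/2 \<le> \<bar>b - (a' - 1/2)\<bar>" using True a' assms(2) by (intro lat0_cross) auto
      then show ?thesis using a' assms(3) by (simp add: abs_minus_commute)
    next
      case False
      then obtain b' where "b' \<in> T" "b = b' - 1/2" using b by auto
      then show ?thesis using a' ab assms(1) unfolding sep_def by auto
    qed
  qed
qed

lemma lat0_disj: "T \<subseteq> lat 0 \<Longrightarrow> T \<inter> (\<lambda>t. t - 1/2) ` T = {}"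
proof (rule ccontr)
  assume T: "T \<subseteq> lat 0" and "T \<inter> (\<lambda>t. t - 1/2) ` T \<noteq> {}"
  then obtain a b where ab: "a \<in> T" "b \<in> T" "a = b - 1/2" by auto
  have "1/2 \<le> \<bar>a - (b - 1/2)\<bar>" using ab T by (intro lat0_cross) auto
  then show False using ab by simp
qed


locale hsetup =
  fixes G :: "real \<Rightarrow> real" and p :: real
  assumes p0: "0 < p" and p1: "p < 1/2"
    and mono: "\<And>a b. a \<le> b \<Longrightarrow> G a \<le> G b"
    and G0: "\<And>x. 0 \<le> G x" and G1: "\<And>x. G x \<le> 1"
    and eq: "\<And>s. G s = (1-p) * G (2* s) + p * G ((s-1)/2)"
    and Gneg: "\<And>x. x < 0 \<Longrightarrow> G x = 0"
begin

lemma G2: "G y = (1-p)^2 * G (4*y) + p*(1-p) * G (y - 1/2) + p*(1-p) * G (y - 1) + p^2 * G ((y-3)/4)"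
proof -
  have e1: "G (2*y) = (1-p) * G (4*y) + p * G (y - 1/2)"
  proof -
    have "G (2*y) = (1-p) * G (2*(2*y)) + p * G ((2*y-1)/2)" by (rule eq)
    moreover have "2*(2*y) = 4*y" "(2*y-1)/2 = y - 1/2" by auto
    ultimately show ?thesis by metis
  qed
  have e2: "G ((y-1)/2) = (1-p) * G (y - 1) + p * G ((y-3)/4)"
  proof -
    have "G ((y-1)/2) = (1-p) * G (2*((y-1)/2)) + p * G (((y-1)/2-1)/2)" by (rule eq)
    moreover have "2*((y-1)/2) = y - 1" "((y-1)/2-1)/2 = (y-3)/4" by (auto simp: field_simps)
    ultimately show ?thesis by metis
  qed
  have "G y = (1-p) * G (2*y) + p * G ((y-1)/2)" by (rule eq)
  also have "\<dots> = (1-p) * ((1-p) * G (4*y) + p * G (y - 1/2)) + p * ((1-p) * G (y - 1) + p * G ((y-3)/4))"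
    by (simp only: e1 e2)
  finally show ?thesis by (simp add: algebra_simps power2_eq_square)
qed

lemma Lam_reindex:
  assumes "inj_on f T"
  shows "Lam G (f ` T) s l = (\<Sum>t\<in>T. G (s + f t + l) - G (s + f t))"
  unfolding Lam_def using assms by (simp add: sum.reindex)

lemma Lam_split:
  assumes "finite T"
  shows "Lam G T s l = (1-p)^2 * Lam G ((\<lambda>t. 4*t) ` T) (4* s) (4*l)
     + p*(1-p) * Lam G T (s - 1/2) l + p*(1-p) * Lam G T (s - 1) l
     + p^2 * Lam G ((\<lambda>t. t/4) ` T) ((s-3)/4) (l/4)"
proof -
  have i1: "inj_on (\<lambda>t::real. 4*t) T" by (auto simp: inj_on_def)
  have i2: "inj_on (\<lambda>t::real. t/4) T" by (auto simp: inj_on_def)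
  have "Lam G T s l = (\<Sum>t\<in>T. (1-p)^2 * (G (4* s + 4*t + 4*l) - G (4* s + 4*t))
     + p*(1-p) * (G (s - 1/2 + t + l) - G (s - 1/2 + t)) + p*(1-p) * (G (s - 1 + t + l) - G (s - 1 + t))
     + p^2 * (G ((s-3)/4 + t/4 + l/4) - G ((s-3)/4 + t/4)))"
    unfolding Lam_def
  proof (rule sum.cong[OF refl])
    fix t
    have a: "4*(s+t+l) = 4* s + 4*t + 4*l" "4*(s+t) = 4* s+4*t"
      "s+t+l - 1/2 = s - 1/2 + t + l" "s+t - 1/2 = s - 1/2 + t"
      "s+t+l - 1 = s - 1 + t + l" "s+t - 1 = s - 1 + t"
      "(s+t+l-3)/4 = (s-3)/4 + t/4 + l/4" "(s+t-3)/4 = (s-3)/4 + t/4" by (auto simp: field_simps)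
    show "G (s + t + l) - G (s + t) = (1-p)^2 * (G (4* s + 4*t + 4*l) - G (4* s + 4*t))
     + p*(1-p) * (G (s - 1/2 + t + l) - G (s - 1/2 + t)) + p*(1-p) * (G (s - 1 + t + l) - G (s - 1 + t))
     + p^2 * (G ((s-3)/4 + t/4 + l/4) - G ((s-3)/4 + t/4))"
      using G2[of "s+t+l"] G2[of "s+t"] unfolding a by (simp add: algebra_simps)
  qed
  also have "\<dots> = (1-p)^2 * Lam G ((\<lambda>t. 4*t) ` T) (4* s) (4*l)
     + p*(1-p) * Lam G T (s - 1/2) l + p*(1-p) * Lam G T (s - 1) l
     + p^2 * Lam G ((\<lambda>t. t/4) ` T) ((s-3)/4) (l/4)"
    unfolding Lam_reindex[OF i1] Lam_reindex[OF i2]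
    by (simp add: Lam_def sum.distrib sum_distrib_left)
  finally show ?thesis .
qed

lemma Lam_shift: "Lam G T (s - 1) l = Lam G ((\<lambda>t. t - 1/2) ` T) (s - 1/2) l"
proof -
  have "inj_on (\<lambda>t::real. t - 1/2) T" by (auto simp: inj_on_def)
  then have "Lam G ((\<lambda>t. t - 1/2) ` T) (s - 1/2) l = (\<Sum>t\<in>T. G (s - 1/2 + (t - 1/2) + l) - G (s - 1/2 + (t - 1/2)))"
    by (rule Lam_reindex)
  also have "\<dots> = Lam G T (s - 1) l" unfolding Lam_def by (intro sum.cong) (auto simp: algebra_simps)
  finally show ?thesis by simp
qed

lemma Lam_union: "finite A \<Longrightarrow> finite B \<Longrightarrow> A \<inter> B = {} \<Longrightarrow> Lam G (A \<union> B) s l = Lam G A s l + Lam G B s l"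
  unfolding Lam_def by (rule sum.union_disjoint)

definition "gam = log 4 (1+p)"
definition "phi u = min 1 ((2*u) powr gam)"
definition "rr = (1-p)/p"
definition "kap = max (4*p*(1-p)) (max ((1-p)^2/2 + p*(1-p)) ((1-p)^2/4 + 3*p*(1-p)))"

lemma gam_pos: "0 < gam"
  unfolding gam_def using p0 by simp

lemma four_gam: "4 powr gam = 1 + p"
  unfolding gam_def using p0 by simp

lemma phi_le1: "phi u \<le> 1" unfolding phi_def by simp
lemma phi_nonneg: "0 \<le> phi u" unfolding phi_def by simp

lemma phi_big: "1/2 \<le> u \<Longrightarrow> phi u = 1"
  unfolding phi_def using ge_one_powr_ge_zero[of "2*u" gam] gam_pos by simp

lemma phi_small: "0 < u \<Longrightarrow> u \<le> 1/2 \<Longrightarrow> phi u = (2*u) powr gam"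
proof -
  assume "0 < u" "u \<le> 1/2"
  then have "(2*u) powr gam \<le> 1 powr gam" using gam_pos by (intro powr_mono2) auto
  then show ?thesis unfolding phi_def by simp
qed

lemma phi_le_powr: "0 < u \<Longrightarrow> phi u \<le> (2*u) powr gam"
  unfolding phi_def by simp

lemma phi_super:
  assumes "0 < u" "u \<le> 1/2"
  shows "(1-p)^2 * phi (4*u) + p*(1-p) * phi (4*u) + p^2 * phi u \<le> phi u"
proof -
  have "phi (4*u) \<le> (2*(4*u)) powr gam" using assms by (intro phi_le_powr) auto
  also have "(2*(4*u)) powr gam = 4 powr gam * (2*u) powr gam"
    by (subst powr_mult[symmetric]) (simp_all add: mult.commute mult.left_commute)
  also have "\<dots> = (1+p) * phi u" using phi_small[OF assms] four_gam by simp
  finally have h: "phi (4*u) \<le> (1+p) * phi u" .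
  have c: "0 \<le> (1-p)^2 + p*(1-p)" using p0 p1 by simp
  have "(1-p)^2 * phi (4*u) + p*(1-p) * phi (4*u) = ((1-p)^2 + p*(1-p)) * phi (4*u)"
    by (simp add: algebra_simps)
  also have "\<dots> \<le> ((1-p)^2 + p*(1-p)) * ((1+p) * phi u)"
    by (rule mult_left_mono[OF h c])
  finally have "(1-p)^2 * phi (4*u) + p*(1-p) * phi (4*u) + p^2 * phi u
      \<le> ((1-p)^2 + p*(1-p)) * ((1+p) * phi u) + p^2 * phi u" by simp
  also have "\<dots> = phi u" by (simp add: algebra_simps power2_eq_square)
  finally show ?thesis .
qed

lemma kap_facts: "kap < 1" "0 \<le> kap" "4*p*(1-p) \<le> kap" "(1-p)^2/2 + p*(1-p) \<le> kap"
   "(1-p)^2/4 + 3*p*(1-p) \<le> kap"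
proof -
  have a: "4*p*(1-p) < 1"
  proof -
    have "0 < (1 - 2*p)^2" using p1 by simp
    then show ?thesis by (simp add: power2_eq_square algebra_simps)
  qed
  have pq: "p*(1-p) \<le> 1/4" using a by simp
  have b: "(1-p)^2/2 + p*(1-p) < 1"
  proof -
    have "(1-p)^2/2 + p*(1-p) = (1-p)*(1+p)/2" by (simp add: power2_eq_square field_simps)
    also have "\<dots> = (1 - p^2)/2" by (simp add: algebra_simps power2_eq_square)
    also have "\<dots> < 1"
    proof -
      have "0 \<le> p^2" by simp
      then have "1 - p^2 < 2" by linarith
      then show ?thesis by simp
    qed
    finally show ?thesis .
  qed
  have c: "(1-p)^2/4 + 3*p*(1-p) < 1"
  proof -
    have "(1-p)*(1-p) < 1*1" using p0 p1 by (intro mult_strict_mono) auto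
    then have "(1-p)^2 < 1" by (simp add: power2_eq_square)
    then show ?thesis using pq by linarith
  qed
  show "kap < 1" using a b c unfolding kap_def by (simp only: max_less_iff_conj)
  show k1: "4*p*(1-p) \<le> kap" unfolding kap_def by (rule max.cobounded1)
  show "(1-p)^2/2 + p*(1-p) \<le> kap" unfolding kap_def by (meson max.cobounded1 max.coboundedI2)
  show "(1-p)^2/4 + 3*p*(1-p) \<le> kap" unfolding kap_def by (meson max.cobounded2 max.coboundedI2)
  have "0 \<le> 4*p*(1-p)" using p0 p1 by simp
  then show "0 \<le> kap" using k1 by linarith
qed

lemma rr_ge1: "1 \<le> rr"
  unfolding rr_def using p0 p1 by simp

lemma rr_id: "p*(1-p)*rr = (1-p)^2" "p^2*rr = p*(1-p)"
  unfolding rr_def using p0 by (simp_all add: power2_eq_square field_simps)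

lemma comb3: "0 \<le> a \<Longrightarrow> 0 \<le> b \<Longrightarrow> 0 \<le> c \<Longrightarrow> 0 \<le> d \<Longrightarrow> (X1::real) \<le> Y1 \<Longrightarrow> X2 \<le> Y2 \<Longrightarrow> X3 \<le> Y3 \<Longrightarrow> X4 \<le> Y4 \<Longrightarrow>
   a*X1 + b*X2 + c*X3 + d*X4 \<le> a*Y1 + b*Y2 + c*Y3 + d*Y4"
  by (intro add_mono mult_left_mono) auto

lemma main:
  "\<forall>j T s l. 0 < l \<longrightarrow> finite T \<longrightarrow> T \<subseteq> lat j \<longrightarrow> sep T l \<longrightarrow>
     Lam G T s l \<le> phi (l*4^j) + kap^n * (rr^j / (2*(l*4^j)))"
proof (induction n)
  case 0
  show ?case
  proof (intro allI impI)
    fix j T s l assume l: "0 < l" and fin: "finite T" and lat: "T \<subseteq> lat j" and sp: "sep T l"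
    have "Lam G T s l \<le> 1" by (rule sep_le1[OF mono G0 G1 fin sp])
    also have "1 \<le> phi (l*4^j) + kap^0 * (rr^j / (2*(l*4^j)))"
    proof (cases "1/2 \<le> l*4^j")
      case True
      have "0 \<le> rr^j / (2*(l*4^j))" using rr_ge1 l by simp
      then show ?thesis using phi_big[OF True] by simp
    next
      case False
      have r: "1 \<le> rr^j" using rr_ge1 by (rule one_le_power)
      have "0 < 2*(l*4^j)" using l by simp
      then have "1 \<le> rr^j / (2*(l*4^j))" using r False by (simp add: le_divide_eq)
      then show ?thesis using phi_nonneg[of "l*4^j"] by simp
    qed
    finally show "Lam G T s l \<le> phi (l*4^j) + kap^0 * (rr^j / (2*(l*4^j)))" .
  qed
next
  case (Suc n)
  note IH = Suc.IH[rule_format]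
  define K where "K = kap^n"
  have K0: "0 \<le> K" unfolding K_def using kap_facts(2) by simp
  have q2: "0 \<le> (1-p)^2" "0 \<le> p*(1-p)" "0 \<le> p^2" using p0 p1 by auto
  show ?case
  proof (intro allI impI)
    fix j T s l assume l: "0 < l" and fin: "finite T" and lat: "T \<subseteq> lat j" and sp: "sep T l"
    have split: "Lam G T s l = (1-p)^2 * Lam G ((\<lambda>t. 4*t) ` T) (4* s) (4*l)
     + p*(1-p) * Lam G T (s - 1/2) l + p*(1-p) * Lam G T (s - 1) l
     + p^2 * Lam G ((\<lambda>t. t/4) ` T) ((s-3)/4) (l/4)" by (rule Lam_split[OF fin])
    have sp4: "sep ((\<lambda>t. 4*t) ` T) (4*l)" using sep_scale[OF sp, of 4] by simp
    have spd: "sep ((\<lambda>t. t/4) ` T) (l/4)" by (rule sep_div4[OF sp])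
    show "Lam G T s l \<le> phi (l*4^j) + kap^Suc n * (rr^j / (2*(l*4^j)))"
    proof (cases j)
      case 0
      then have lat0: "T \<subseteq> lat 0" using lat by simp
      have h1: "Lam G ((\<lambda>t. 4*t) ` T) (4* s) (4*l) \<le> phi (4*l) + K * (1 / (2*(4*l)))"
        using IH[of "4*l" "(\<lambda>t. 4*t) ` T" 0 "4* s"] l fin lat_mult4_0[OF lat0] sp4 unfolding K_def by simp
      have h3: "Lam G ((\<lambda>t. t/4) ` T) ((s-3)/4) (l/4) \<le> phi l + K * (rr / (2*l))"
        using IH[of "l/4" "(\<lambda>t. t/4) ` T" 1 "(s-3)/4"] l fin lat_div4[OF lat0] spd unfolding K_def by simp
      show ?thesis
      proof (cases "l \<le> 1/2")
        case True
        let ?T' = "T \<union> (\<lambda>t. t - 1/2) ` T"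
        have h2: "Lam G ?T' (s - 1/2) l \<le> phi (4*l) + K * (rr / (2*(4*l)))"
          using IH[of l ?T' 1 "s - 1/2"] l fin lat_double[OF lat0] sep_double[OF sp lat0 True]
          unfolding K_def by (simp add: mult.commute)
        have hU: "Lam G T (s - 1/2) l + Lam G T (s - 1) l = Lam G ?T' (s - 1/2) l"
          unfolding Lam_shift using Lam_union[OF fin finite_imageI[OF fin] lat0_disj[OF lat0]] by simp
        have "Lam G T s l = (1-p)^2 * Lam G ((\<lambda>t. 4*t) ` T) (4* s) (4*l)
           + p*(1-p) * (Lam G T (s - 1/2) l + Lam G T (s - 1) l) + 0 * 0 + p^2 * Lam G ((\<lambda>t. t/4) ` T) ((s-3)/4) (l/4)"
          unfolding split by (simp only: distrib_left mult_zero_left add_0_right add.assoc)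
        also have "\<dots> = (1-p)^2 * Lam G ((\<lambda>t. 4*t) ` T) (4* s) (4*l)
           + p*(1-p) * Lam G ?T' (s - 1/2) l + 0 * 0 + p^2 * Lam G ((\<lambda>t. t/4) ` T) ((s-3)/4) (l/4)"
          by (simp only: hU)
        also have "\<dots> \<le> (1-p)^2 * (phi (4*l) + K * (1 / (2*(4*l)))) + p*(1-p) * (phi (4*l) + K * (rr / (2*(4*l))))
            + 0 * 0 + p^2 * (phi l + K * (rr / (2*l)))"
          by (rule comb3[OF q2(1) q2(2) order_refl q2(3) h1 h2 order_refl h3])
        also have "\<dots> = ((1-p)^2 * phi (4*l) + p*(1-p) * phi (4*l) + p^2 * phi l)
            + K * (((1-p)^2/2 + p*(1-p)) / (2*l))"
          using l p0 unfolding rr_def by (simp add: field_simps power2_eq_square)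
        also have "\<dots> \<le> phi l + K * (kap / (2*l))"
          using phi_super[OF l True] kap_facts(4) K0 l
          by (intro add_mono mult_left_mono divide_right_mono) auto
        finally show ?thesis using \<open>j = 0\<close> unfolding K_def by (simp add: mult.commute)
      next
        case False
        have ha: "Lam G T (s - 1/2) l \<le> phi l + K * (1 / (2*l))"
          using IH[of l T 0 "s - 1/2"] l fin lat0 sp unfolding K_def by simp
        have hb: "Lam G T (s - 1) l \<le> phi l + K * (1 / (2*l))"
          using IH[of l T 0 "s - 1"] l fin lat0 sp unfolding K_def by simp
        have "Lam G T s l \<le> (1-p)^2 * (phi (4*l) + K * (1 / (2*(4*l)))) + p*(1-p) * (phi l + K * (1 / (2*l)))
            + p*(1-p) * (phi l + K * (1 / (2*l))) + p^2 * (phi l + K * (rr / (2*l)))"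
          unfolding split by (rule comb3[OF q2(1) q2(2) q2(2) q2(3) h1 ha hb h3])
        also have "\<dots> = ((1-p)^2 * phi (4*l) + 2*p*(1-p) * phi l + p^2 * phi l)
            + K * (((1-p)^2/4 + 3*p*(1-p)) / (2*l))"
          using l p0 unfolding rr_def by (simp add: field_simps power2_eq_square)
        also have "\<dots> \<le> phi l + K * (kap / (2*l))"
        proof (intro add_mono mult_left_mono divide_right_mono)
          have "phi l = 1" using False by (intro phi_big) auto
          moreover have "(1-p)^2 * phi (4*l) \<le> (1-p)^2 * 1" using phi_le1 q2 by (intro mult_left_mono) auto
          moreover have "(1-p)^2 + 2*p*(1-p) + p^2 = 1" by (simp add: power2_eq_square algebra_simps)
          ultimately show "(1-p)^2 * phi (4*l) + 2*p*(1-p) * phi l + p^2 * phi l \<le> phi l" by simp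
        qed (use kap_facts(5) K0 l in auto)
        finally show ?thesis using \<open>j = 0\<close> unfolding K_def by (simp add: mult.commute)
      qed
    next
      case (Suc j')
      define u where "u = l * 4^j"
      have u0: "0 < u" unfolding u_def using l by simp
      have e1: "4*l*4^j' = u" unfolding u_def Suc by simp
      have e3: "l/4*4^(Suc j) = u" unfolding u_def by simp
      have h1: "Lam G ((\<lambda>t. 4*t) ` T) (4* s) (4*l) \<le> phi u + K * (rr^j' / (2*u))"
        using IH[of "4*l" "(\<lambda>t. 4*t) ` T" j' "4* s"] l fin lat_mult4_Suc[of T j'] lat Suc sp4
        unfolding K_def e1 by simp
      have ha: "Lam G T (s - 1/2) l \<le> phi u + K * (rr^j / (2*u))"
        using IH[of l T j "s - 1/2"] l fin lat sp unfolding K_def u_def by simp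
      have hb: "Lam G T (s - 1) l \<le> phi u + K * (rr^j / (2*u))"
        using IH[of l T j "s - 1"] l fin lat sp unfolding K_def u_def by simp
      have h3: "Lam G ((\<lambda>t. t/4) ` T) ((s-3)/4) (l/4) \<le> phi u + K * (rr^(Suc j) / (2*u))"
        using IH[of "l/4" "(\<lambda>t. t/4) ` T" "Suc j" "(s-3)/4"] l fin lat_div4[OF lat] spd
        unfolding K_def e3 by simp
      have "Lam G T s l \<le> (1-p)^2 * (phi u + K * (rr^j' / (2*u))) + p*(1-p) * (phi u + K * (rr^j / (2*u)))
            + p*(1-p) * (phi u + K * (rr^j / (2*u))) + p^2 * (phi u + K * (rr^(Suc j) / (2*u)))"
        unfolding split by (rule comb3[OF q2(1) q2(2) q2(2) q2(3) h1 ha hb h3])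
      also have "\<dots> = phi u + K * ((4*p*(1-p)) * (rr^j / (2*u)))"
        using u0 p0 unfolding rr_def Suc by (simp add: field_simps power2_eq_square)
      also have "\<dots> \<le> phi u + K * (kap * (rr^j / (2*u)))"
      proof -
        have "0 \<le> rr^j / (2*u)" using u0 rr_ge1 by simp
        then have "(4*p*(1-p)) * (rr^j / (2*u)) \<le> kap * (rr^j / (2*u))"
          by (rule mult_right_mono[OF kap_facts(3)])
        then show ?thesis using K0 by (intro add_mono order_refl mult_left_mono)
      qed
      finally show ?thesis unfolding u_def K_def by (simp add: mult.assoc mult.left_commute)
    qed
  qed
qed

lemma holder: "0 < h \<Longrightarrow> G (s + h) - G s \<le> phi h"
proof -
  assume h: "0 < h"
  have lat: "{0} \<subseteq> lat 0" unfolding lat_def by (auto intro!: exI[of _ 0])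
  have sp: "sep {0} h" unfolding sep_def by simp
  have b: "G (s + h) - G s \<le> phi h + kap^n * (1 / (2*h))" for n
    using main[rule_format, of h "{0}" 0 s n] h lat sp by (simp add: Lam_def)
  have "(\<lambda>n. phi h + kap^n * (1 / (2*h))) \<longlonglongrightarrow> phi h + 0 * (1 / (2*h))"
    using kap_facts(1,2) by (intro tendsto_intros) simp
  then show ?thesis using b by (intro LIMSEQ_le_const) auto
qed

lemma G_iter: "q^k * G (2^k * s) \<le> G s" if "q = 1 - p" for q
  using that
proof (induction k arbitrary: s)
  case 0 then show ?case by simp
next
  case (Suc k)
  have "G s = (1-p) * G (2* s) + p * G ((s-1)/2)" by (rule eq)
  moreover have "0 \<le> p * G ((s-1)/2)" using p0 G0 by simp
  moreover have "q^k * G (2^k * (2* s)) \<le> G (2* s)" using Suc by blast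
  moreover have "0 \<le> q" using Suc p1 by simp
  ultimately have "q * (q^k * G (2^k * (2* s))) \<le> G s" using Suc(2)
    by (smt (verit) mult_left_mono)
  then show ?case by (simp add: mult.assoc mult.left_commute)
qed

lemma mu_step: "a \<le> b \<Longrightarrow> (1-p) * (G (2*b) - G (2*a)) \<le> G b - G a"
  "a \<le> b \<Longrightarrow> p * (G ((b-1)/2) - G ((a-1)/2)) \<le> G b - G a"
proof -
  assume ab: "a \<le> b"
  have d1: "0 \<le> G (2*b) - G (2*a)" using mono[of "2*a" "2*b"] ab by simp
  have d2: "0 \<le> G ((b-1)/2) - G ((a-1)/2)" using mono[of "(a-1)/2" "(b-1)/2"] ab by simp
  have e: "G b - G a = (1-p) * (G (2*b) - G (2*a)) + p * (G ((b-1)/2) - G ((a-1)/2))"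
    using eq[of a] eq[of b] by (simp add: algebra_simps)
  show "(1-p) * (G (2*b) - G (2*a)) \<le> G b - G a" using e d2 p0 by simp
  show "p * (G ((b-1)/2) - G ((a-1)/2)) \<le> G b - G a" using e d1 p1 by simp
qed

lemma mu_iter: "a \<le> b \<Longrightarrow> (1-p)^k * (G (2^k*b) - G (2^k*a)) \<le> G b - G a"
proof (induction k arbitrary: a b)
  case 0 then show ?case by simp
next
  case (Suc k)
  have "(1-p)^k * (G (2^k*(2*b)) - G (2^k*(2*a))) \<le> G (2*b) - G (2*a)" using Suc by simp
  then have "(1-p) * ((1-p)^k * (G (2^k*(2*b)) - G (2^k*(2*a)))) \<le> (1-p) * (G (2*b) - G (2*a))"
    using p1 by (intro mult_left_mono) auto
  also have "\<dots> \<le> G b - G a" by (rule mu_step(1)[OF Suc.prems])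
  finally show ?case by (simp add: mult.assoc mult.left_commute)
qed

lemma G_pos_all:
  assumes S: "0 < G S"
  shows "0 < d \<Longrightarrow> 0 < G d"
proof -
  assume d: "0 < d"
  obtain k where k: "S / d < 2^k" using real_arch_pow[of 2 "S/d"] by auto
  have "S \<le> 2^k * d" using k d by (simp add: divide_less_eq less_imp_le mult.commute)
  then have "G S \<le> G (2^k * d)" by (rule mono)
  then have "0 < G (2^k * d)" using S by simp
  then have "0 < (1-p)^k * G (2^k * d)" using p1 by simp
  also have "\<dots> \<le> G d" by (rule G_iter) simp
  finally show ?thesis .
qed

lemma G_pos_interval:
  assumes S: "0 < G S" and a: "0 \<le> a" and h: "0 < h"
  shows "G a < G (a + h)"
proof -
  have claim: "\<forall>c. -1 \<le> c \<and> c < real n \<longrightarrow> 0 < G (c + L) - G c" if L: "2 \<le> L" for n L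
  proof (induction n)
    case 0
    show ?case
    proof (intro allI impI)
      fix c :: real assume c: "-1 \<le> c \<and> c < real 0"
      have "0 < G (c + L)" using G_pos_all[OF S] c L by simp
      then show "0 < G (c + L) - G c" using Gneg[of c] c by simp
    qed
  next
    case (Suc n)
    show ?case
    proof (intro allI impI)
      fix c :: real assume c: "-1 \<le> c \<and> c < real (Suc n)"
      show "0 < G (c + L) - G c"
      proof (cases "c < 0")
        case True
        have "0 < G (c + L)" using G_pos_all[OF S] c L True by simp
        then show ?thesis using Gneg[of c] True by simp
      next
        case False
        have D: "0 < G (c - 1 + L) - G (c - 1)" using Suc[rule_format, of "c-1"] c False by simp
        have m1: "(1-p) * (G (2*((c + L - 1)/2)) - G (2*((c - 1)/2))) \<le> G ((c + L - 1)/2) - G ((c - 1)/2)"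
          using L by (intro mu_step(1)) simp
        have "2*((c + L - 1)/2) = c - 1 + L" "2*((c - 1)/2) = c - 1" by simp_all
        then have m1': "(1-p) * (G (c - 1 + L) - G (c - 1)) \<le> G ((c + L - 1)/2) - G ((c - 1)/2)"
          using m1 by metis
        have "0 < (1-p) * (G (c - 1 + L) - G (c - 1))" using D p1 by simp
        then have M: "0 < G ((c + L - 1)/2) - G ((c - 1)/2)" using m1' by linarith
        have m2: "p * (G ((c + L - 1)/2) - G ((c - 1)/2)) \<le> G (c + L) - G c"
          using mu_step(2)[of c "c + L"] L by simp
        have "0 < p * (G ((c + L - 1)/2) - G ((c - 1)/2))" using M p0 by simp
        then show ?thesis using m2 by linarith
      qed
    qed
  qed
  obtain k where k: "2 / h < 2^k" using real_arch_pow[of 2 "2/h"] by auto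
  have L: "2 \<le> 2^k * h" using k h by (simp add: divide_less_eq less_imp_le mult.commute)
  obtain n where n: "2^k * a < real n" using reals_Archimedean2 by blast
  have "0 < G (2^k * a + 2^k * h) - G (2^k * a)"
  proof -
    have "0 \<le> 2^k * a" using a by simp
    then show ?thesis using claim[OF L, of n, rule_format, of "2^k * a"] n by simp
  qed
  then have "0 < (1-p)^k * (G (2^k * (a + h)) - G (2^k * a))" using p1 by (simp add: distrib_left)
  also have "\<dots> \<le> G (a + h) - G a" using h by (intro mu_iter) simp
  finally show ?thesis by simp
qed

lemma G_halve: "\<forall>s. 0 < s \<longrightarrow> 2^k * s \<le> 1 \<longrightarrow> G s = (1-p)^k * G (2^k * s)"
proof (induction k)
  case 0 then show ?case by simp
next
  case (Suc k)
  show ?case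
  proof (intro allI impI)
    fix s :: real assume s: "0 < s" "2^Suc k * s \<le> 1"
    have "1 \<le> (2::real)^k" by simp
    then have "2 * s \<le> 2^Suc k * s" using s by (simp add: mult_right_mono)
    then have "2 * s \<le> 1" using s(2) by linarith
    then have s2: "s \<le> 1/2" by simp
    have "G s = (1-p) * G (2* s) + p * G ((s-1)/2)" by (rule eq)
    also have "G ((s-1)/2) = 0" using s2 by (intro Gneg) simp
    also have "G (2* s) = (1-p)^k * G (2^k * (2* s))" using Suc[rule_format, of "2* s"] s by (simp add: mult.assoc mult.commute)
    finally show "G s = (1-p)^Suc k * G (2^Suc k * s)" by (simp add: mult.assoc mult.commute)
  qed
qed

lemma ln_over_ln_0: "((\<lambda>s. C / ln s) \<longlongrightarrow> 0) (at_right (0::real))"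
proof -
  have "filterlim ln at_infinity (at_right (0::real))"
    using ln_at_0 at_bot_le_at_infinity filterlim_mono by blast
  then show ?thesis by (intro tendsto_divide_0[OF tendsto_const])
qed

lemma loglim:
  assumes c0: "0 < G (1/2)"
  shows "((\<lambda>s. ln (G s) / ln s) \<longlongrightarrow> log (1/2) (1-p)) (at_right 0)"
proof -
  define q where "q = 1 - p"
  define c where "c = G (1/2)"
  have q: "0 < q" "q < 1" unfolding q_def using p0 p1 by auto
  have lnq: "ln q < 0" using q by simp
  have c: "0 < c" "c \<le> 1" unfolding c_def using c0 G1 by auto
  have L: "log (1/2) (1-p) = - ln q / ln 2" unfolding q_def log_def by (simp add: ln_div)
  let ?f = "\<lambda>s. - ln q / ln 2 - ln q / ln s"
  let ?h = "\<lambda>s. - ln q / ln 2 + ln c / ln s"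
  have bounds: "?f s \<le> ln (G s) / ln s \<and> ln (G s) / ln s \<le> ?h s" if s: "0 < s" "s < 1/2" for s
  proof -
    define lam where "lam = log 2 (1/s)"
    have lam_eq: "lam = - ln s / ln 2" unfolding lam_def log_def by (simp add: ln_div)
    have "2 < 1/s" using s by (simp add: field_simps)
    then have lam1: "1 < lam" unfolding lam_def using s by (simp add: less_log_iff)
    define k where "k = nat \<lfloor>lam\<rfloor>"
    have kr: "real k = of_int \<lfloor>lam\<rfloor>" unfolding k_def using lam1 by simp
    have k1: "real k \<le> lam" "lam < real k + 1" using kr by linarith+
    have lns: "ln s < 0" using s by simp
    have "ln (2^k * s) = real k * ln 2 + ln s" using s by (simp add: ln_mult ln_realpow)
    also have "\<dots> \<le> 0" using k1(1) unfolding lam_eq by (simp add: field_simps)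
    finally have A: "2^k * s \<le> 1" using s by simp
    have "ln (1/2) < ln (2^k * s)"
    proof -
      have "ln (2^k * s) = real k * ln 2 + ln s" using s by (simp add: ln_mult ln_realpow)
      moreover have "- ln 2 < real k * ln 2 + ln s" using k1(2) unfolding lam_eq by (simp add: field_simps)
      ultimately show ?thesis by (simp add: ln_div)
    qed
    then have B: "1/2 < 2^k * s" using s by simp
    define g where "g = G (2^k * s)"
    have g: "c \<le> g" "g \<le> 1" unfolding g_def c_def using mono[of "1/2" "2^k * s"] B G1 by auto
    have g0: "0 < g" using g c by simp
    have Gs: "G s = q^k * g" unfolding g_def q_def using G_halve[rule_format, of s k] s A by simp
    have lnG: "ln (G s) = real k * ln q + ln g" unfolding Gs using q g0 by (simp add: ln_mult ln_realpow)
    have lng: "ln c \<le> ln g" "ln g \<le> 0" using g c g0 by auto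
    have r: "0 < ln q / ln s" using lnq lns by (simp add: divide_neg_neg)
    have e: "ln (G s) / ln s = real k * (ln q / ln s) + ln g / ln s" unfolding lnG using lns by (simp add: field_simps)
    have f_eq: "?f s = (lam - 1) * (ln q / ln s)" unfolding lam_eq using lns by (simp add: field_simps)
    have h_eq: "?h s = lam * (ln q / ln s) + ln c / ln s" unfolding lam_eq using lns by (simp add: field_simps)
    have t1: "(lam - 1) * (ln q / ln s) \<le> real k * (ln q / ln s)" using k1 r by (intro mult_right_mono) auto
    have t2: "0 \<le> ln g / ln s" using lng lns by (simp add: divide_nonpos_neg)
    have t3: "real k * (ln q / ln s) \<le> lam * (ln q / ln s)" using k1 r by (intro mult_right_mono) auto
    have t4: "ln g / ln s \<le> ln c / ln s" using lng lns by (simp add: divide_right_mono_neg)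
    show ?thesis unfolding e f_eq h_eq using t1 t2 t3 t4 by linarith
  qed
  have ev: "eventually (\<lambda>s. ?f s \<le> ln (G s) / ln s \<and> ln (G s) / ln s \<le> ?h s) (at_right 0)"
    unfolding eventually_at_right[OF zero_less_one] using bounds
    by (intro exI[of _ "1/2"]) auto
  have lf: "(?f \<longlongrightarrow> - ln q / ln 2 - 0) (at_right 0)"
    by (intro tendsto_diff tendsto_const ln_over_ln_0)
  have lh: "(?h \<longlongrightarrow> - ln q / ln 2 + 0) (at_right 0)"
    by (intro tendsto_add tendsto_const ln_over_ln_0)
  have ev1: "eventually (\<lambda>s. ?f s \<le> ln (G s) / ln s) (at_right 0)"
    using ev by (rule eventually_mono) auto
  have ev2: "eventually (\<lambda>s. ln (G s) / ln s \<le> ?h s) (at_right 0)"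
    using ev by (rule eventually_mono) auto
  show ?thesis unfolding L
    by (rule tendsto_sandwich[OF ev1 ev2]) (use lf lh in simp_all)
qed

lemma phi_bound:
  assumes h: "0 < h"
  shows "phi h \<le> 2 / (1 - 2*p)^2 * (h powr (1/2 * p^2) + h powr (1/2 * (1 - 2*p)^3))"
proof -
  have ln4: "ln (4::real) = 2 * ln 2"
  proof -
    have "ln (4::real) = ln (2 * 2)" by simp
    also have "\<dots> = ln 2 + ln 2" using ln_mult[of "2::real" 2] by simp
    finally show ?thesis by simp
  qed
  have lp: "p - p^2 \<le> ln (1 + p)" using p0 p1 by (intro ln_one_plus_pos_lower_bound) auto
  have "p^2 * ln 2 \<le> p^2 * 1" using ln_2_less_1 by (intro mult_left_mono) auto
  moreover have "p^2 \<le> p - p^2"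
  proof -
    have "p * (2*p) \<le> p * 1" using p0 p1 by (intro mult_left_mono) auto
    then show ?thesis by (simp add: power2_eq_square)
  qed
  ultimately have "p^2 * ln 2 \<le> ln (1 + p)" using lp by linarith
  moreover have "0 < 2 * ln (2::real)" by simp
  ultimately have g1: "p^2/2 \<le> gam" unfolding gam_def log_def ln4 by (simp add: pos_le_divide_eq)
  have g2: "gam \<le> 1"
  proof -
    have "log 4 (1+p) \<le> log 4 4" using p0 p1 by (subst log_le_cancel_iff) auto
    then show ?thesis unfolding gam_def by simp
  qed
  define M where "M = h powr (p^2/2)"
  have M0: "0 \<le> M" unfolding M_def by simp
  have pm: "phi h \<le> 2 * M"
  proof (cases "1 \<le> h")
    case True
    have "1 \<le> M" unfolding M_def using True by (intro ge_one_powr_ge_zero) auto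
    then show ?thesis using phi_le1[of h] by linarith
  next
    case False
    have "phi h \<le> (2*h) powr gam" using h by (rule phi_le_powr)
    also have "\<dots> = 2 powr gam * h powr gam" by (rule powr_mult)
    also have "\<dots> \<le> 2 * M"
    proof (rule mult_mono)
      show "2 powr gam \<le> 2" using powr_mono[OF g2, of 2] by simp
      show "h powr gam \<le> M" unfolding M_def using g1 h False by (intro powr_mono') auto
    qed (use M0 in auto)
    finally show ?thesis .
  qed
  have c: "1 \<le> 1 / (1 - 2*p)^2"
  proof -
    have "0 < (1 - 2*p)^2" using p1 by simp
    moreover have "(1 - 2*p)^2 \<le> 1"
    proof -
      have "(1 - 2*p) * (1 - 2*p) \<le> 1 * 1" using p0 p1 by (intro mult_mono) auto
      then show ?thesis by (simp add: power2_eq_square)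
    qed
    ultimately show ?thesis by simp
  qed
  have M': "0 \<le> h powr (1/2 * (1 - 2*p)^3)" by simp
  have "2 * M \<le> 2 * (1 / (1 - 2*p)^2) * (M + h powr (1/2 * (1 - 2*p)^3))"
  proof -
    have "2 * M \<le> 2 * (M + h powr (1/2 * (1 - 2*p)^3))" using M' by simp
    also have "\<dots> \<le> 2 * (1 / (1 - 2*p)^2) * (M + h powr (1/2 * (1 - 2*p)^3))"
    proof -
      have "2 * 1 \<le> 2 * (1 / (1 - 2*p)^2)" using c by simp
      then have "(2 * 1) * (M + h powr (1/2 * (1 - 2*p)^3)) \<le> (2 * (1 / (1 - 2*p)^2)) * (M + h powr (1/2 * (1 - 2*p)^3))"
        by (rule mult_right_mono) (use M0 M' in simp)
      then show ?thesis by simp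
    qed
    finally show ?thesis .
  qed
  moreover have "M = h powr (1/2 * p^2)" unfolding M_def by simp
  ultimately show ?thesis using pm by simp
qed

end


lemma ruinN_nonpos: "x \<le> 0 \<Longrightarrow> 0 < p \<Longrightarrow> p < 1 \<Longrightarrow> ruinN x p N = 1"
  by (cases N) (simp_all add: ruinN_0 ruinN_Suc)

lemma ruin_nonpos: "x \<le> 0 \<Longrightarrow> 0 < p \<Longrightarrow> p < 1 \<Longrightarrow> ruin x p = 1"
proof -
  assume a: "x \<le> 0" "0 < p" "p < 1"
  have "(\<lambda>N. ruinN x p N) \<longlonglongrightarrow> 1" using ruinN_nonpos[OF a] by simp
  then show ?thesis using ruinN_lim LIMSEQ_unique by blast
qed

lemma ruin_eq:
  assumes x: "0 < x" and p: "0 < p" "p < 1"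
  shows "ruin x p = p * ruin ((x+1)/2) p + (1-p) * ruin (2*x-2) p"
proof -
  have "(\<lambda>N. ruinN x p (Suc N)) \<longlonglongrightarrow> ruin x p" using ruinN_lim by (rule LIMSEQ_Suc)
  moreover have "(\<lambda>N. ruinN x p (Suc N)) \<longlonglongrightarrow> p * ruin ((x+1)/2) p + (1-p) * ruin (2*x-2) p"
    unfolding ruinN_Suc[OF p] using x by (simp, intro tendsto_intros ruinN_lim)
  ultimately show ?thesis using LIMSEQ_unique by blast
qed

lemma zero_by_powers:
  fixes v a :: real
  assumes "\<And>k. v \<le> a^k" "0 \<le> a" "a < 1"
  shows "v \<le> 0"
proof -
  have "(\<lambda>k. a^k) \<longlonglongrightarrow> 0" using assms by (intro LIMSEQ_power_zero) simp
  then show ?thesis by (rule LIMSEQ_le_const) (use assms(1) in auto)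
qed

lemma ruin_below2:
  assumes p: "0 < p" "p < 1" and x: "x \<le> 2"
  shows "ruin x p = 1"
proof -
  define g where "g y = 1 - ruin y p" for y :: real
  have g0: "0 \<le> g y" "g y \<le> 1" for y :: real unfolding g_def using ruin_bounds[of y p] by auto
  have gn: "y \<le> 0 \<Longrightarrow> g y = 0" for y :: real unfolding g_def using ruin_nonpos p by simp
  have ge: "0 < y \<Longrightarrow> g y = p * g ((y+1)/2) + (1-p) * g (2*y-2)" for y :: real
    unfolding g_def using ruin_eq[of y p] p by (simp add: algebra_simps)
  have s1: "\<forall>y. 0 < y \<and> y < 1 \<longrightarrow> g y \<le> p^k" for k
  proof (induction k)
    case 0 then show ?case using g0 by simp
  next
    case (Suc k)
    show ?case
    proof (intro allI impI)
      fix y :: real assume y: "0 < y \<and> y < 1"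
      have "g y = p * g ((y+1)/2)" using ge[of y] gn[of "2*y-2"] y by simp
      also have "\<dots> \<le> p * p^k" using Suc[rule_format, of "(y+1)/2"] y p by (intro mult_left_mono) auto
      finally show "g y \<le> p^Suc k" by simp
    qed
  qed
  have z1: "y < 1 \<Longrightarrow> g y = 0" for y :: real
  proof -
    assume y: "y < 1"
    show "g y = 0"
    proof (cases "y \<le> 0")
      case True then show ?thesis by (rule gn)
    next
      case False
      then have "g y \<le> 0" using s1 y p by (intro zero_by_powers[of _ p]) auto
      then show ?thesis using g0[of y] by simp
    qed
  qed
  have s2: "\<forall>y. 1 \<le> y \<and> y < 3/2 \<longrightarrow> g y \<le> p^k" for k
  proof (induction k)
    case 0 then show ?case using g0 by simp
  next
    case (Suc k)
    show ?case
    proof (intro allI impI)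
      fix y :: real assume y: "1 \<le> y \<and> y < 3/2"
      have "g y = p * g ((y+1)/2)" using ge[of y] z1[of "2*y-2"] y by simp
      also have "\<dots> \<le> p * p^k" using Suc[rule_format, of "(y+1)/2"] y p by (intro mult_left_mono) auto
      finally show "g y \<le> p^Suc k" by simp
    qed
  qed
  have z2: "y < 3/2 \<Longrightarrow> g y = 0" for y :: real
  proof -
    assume y: "y < 3/2"
    show "g y = 0"
    proof (cases "y < 1")
      case True then show ?thesis by (rule z1)
    next
      case False
      then have "g y \<le> 0" using s2 y p by (intro zero_by_powers[of _ p]) auto
      then show ?thesis using g0[of y] by simp
    qed
  qed
  have s3: "\<forall>y. 1 \<le> y \<and> y < 2 \<longrightarrow> g y \<le> (1-p)^k" for k
  proof (induction k)
    case 0 then show ?case using g0 by simp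
  next
    case (Suc k)
    show ?case
    proof (intro allI impI)
      fix y :: real assume y: "1 \<le> y \<and> y < 2"
      show "g y \<le> (1-p)^Suc k"
      proof (cases "y < 3/2")
        case True then show ?thesis using z2 p by simp
      next
        case False
        have "g y = (1-p) * g (2*y-2)" using ge[of y] z2[of "(y+1)/2"] y by simp
        also have "\<dots> \<le> (1-p) * (1-p)^k" using Suc[rule_format, of "2*y-2"] y False p by (intro mult_left_mono) auto
        finally show "g y \<le> (1-p)^Suc k" by simp
      qed
    qed
  qed
  have z3: "y < 2 \<Longrightarrow> g y = 0" for y :: real
  proof -
    assume y: "y < 2"
    show "g y = 0"
    proof (cases "y < 1")
      case True then show ?thesis by (rule z1)
    next
      case False
      then have "g y \<le> 0" using s3 y p by (intro zero_by_powers[of _ "1-p"]) auto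
      then show ?thesis using g0[of y] by simp
    qed
  qed
  have "g 2 = p * g (3/2) + (1-p) * g 2" using ge[of 2] by simp
  then have "g 2 = (1-p) * g 2" using z3[of "3/2"] by simp
  then have "p * g 2 = 0" by (simp add: algebra_simps)
  then have "g 2 = 0" using p by simp
  then have "g x = 0" using z3[of x] x by (cases "x < 2") auto
  then show ?thesis unfolding g_def by simp
qed

lemma exists_theta:
  fixes p :: real
  assumes p: "0 < p" "p < 1/2"
  shows "\<exists>\<theta>>0. p * exp (\<theta> * ln 2) + (1-p) * exp (- (\<theta> * (ln 2 / (2*(1-p))))) < 1"
proof -
  define \<delta> where "\<delta> = ln 2 / (2*(1-p))"
  define F where "F \<theta> = p * exp (\<theta> * ln 2) + (1-p) * exp (- (\<theta> * \<delta>))" for \<theta> :: real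
  have D: "(F has_real_derivative (p * ln 2 - (1-p) * \<delta>)) (at 0)"
    unfolding F_def by (auto intro!: derivative_eq_intros)
  have "(1-p) * \<delta> = ln 2 / 2" unfolding \<delta>_def using p by (simp add: field_simps)
  moreover have "p * ln 2 < (1/2) * ln 2" using p by (intro mult_strict_right_mono) auto
  ultimately have neg: "p * ln 2 - (1-p) * \<delta> < 0" by linarith
  obtain d where d: "d > 0" "\<forall>h>0. h < d \<longrightarrow> F 0 > F (0 + h)" using DERIV_neg_dec_right[OF D neg] by blast
  have "F (d/2) < F 0" using d by simp
  moreover have "F 0 = 1" unfolding F_def by simp
  ultimately show ?thesis using d unfolding F_def \<delta>_def by (intro exI[of _ "d/2"]) auto
qed

definition U :: "real \<Rightarrow> real \<Rightarrow> real \<Rightarrow> real" where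
  "U R \<theta> y = (if R \<le> y then exp (\<theta> * (ln R - ln y)) else 1)"

lemma U_le1: "0 < R \<Longrightarrow> 0 \<le> \<theta> \<Longrightarrow> U R \<theta> y \<le> 1"
  unfolding U_def by (auto simp: mult_nonneg_nonpos)

lemma U_le_exp: "0 < z \<Longrightarrow> 0 < R \<Longrightarrow> 0 \<le> \<theta> \<Longrightarrow> U R \<theta> z \<le> exp (\<theta> * (ln R - ln z))"
  unfolding U_def by (auto simp: not_le intro!: mult_nonneg_nonneg less_imp_le)

lemma U_super:
  assumes p: "0 < p" "p < 1/2" and th: "0 < \<theta>"
    and F: "p * exp (\<theta> * ln 2) + (1-p) * exp (- (\<theta> * (ln 2 / (2*(1-p))))) < 1"
    and R: "1 \<le> R" "1 / (2 - exp (ln 2 / (2*(1-p)))) \<le> R"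
    and y: "-1 < y"
  shows "p * U R \<theta> (y/2) + (1-p) * U R \<theta> (2*y-1) \<le> U R \<theta> y"
proof (cases "R \<le> y")
  case False
  have "p * U R \<theta> (y/2) + (1-p) * U R \<theta> (2*y-1) \<le> p * 1 + (1-p) * 1"
    using U_le1[of R \<theta>] R th p by (intro add_mono mult_left_mono) auto
  then show ?thesis using False unfolding U_def by simp
next
  case True
  define \<delta> where "\<delta> = ln 2 / (2*(1-p))"
  have dl: "\<delta> < ln 2" unfolding \<delta>_def using p by (simp add: field_simps)
  then have ed: "exp \<delta> < 2" by (metis exp_less_cancel_iff exp_ln zero_less_numeral)
  have y1: "1 \<le> y" using True R by simp
  define E where "E = exp (\<theta> * (ln R - ln y))"
  have E0: "0 \<le> E" unfolding E_def by simp
  have R0: "0 < R" using R by simp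
  have u1: "U R \<theta> (y/2) \<le> exp (\<theta> * ln 2) * E"
  proof -
    have "U R \<theta> (y/2) \<le> exp (\<theta> * (ln R - ln (y/2)))" using y1 R0 th by (intro U_le_exp) auto
    also have "\<theta> * (ln R - ln (y/2)) = \<theta> * ln 2 + \<theta> * (ln R - ln y)"
      using y1 by (simp add: ln_div algebra_simps)
    finally show ?thesis unfolding E_def by (simp add: exp_add)
  qed
  have u2: "U R \<theta> (2*y-1) \<le> exp (- (\<theta> * \<delta>)) * E"
  proof -
    have "1 / (2 - exp \<delta>) \<le> y" using R True unfolding \<delta>_def by simp
    then have "1 \<le> y * (2 - exp \<delta>)" using ed by (simp add: divide_le_eq)
    then have c: "exp \<delta> * y \<le> 2*y - 1" by (simp add: algebra_simps)
    have pos: "0 < exp \<delta> * y" using y1 by simp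
    have "ln (exp \<delta> * y) \<le> ln (2*y - 1)" using c pos by simp
    then have l: "\<delta> + ln y \<le> ln (2*y-1)" using y1 by (simp add: ln_mult)
    have "U R \<theta> (2*y-1) \<le> exp (\<theta> * (ln R - ln (2*y-1)))" using y1 R0 th by (intro U_le_exp) auto
    also have "\<dots> \<le> exp (\<theta> * (ln R - ln y - \<delta>))" using l th by (simp add: mult_left_mono)
    also have "\<dots> = exp (- (\<theta> * \<delta>)) * E" unfolding E_def by (simp add: exp_add[symmetric] algebra_simps)
    finally show ?thesis .
  qed
  have "p * U R \<theta> (y/2) + (1-p) * U R \<theta> (2*y-1) \<le> p * (exp (\<theta> * ln 2) * E) + (1-p) * (exp (- (\<theta> * \<delta>)) * E)"
    using u1 u2 p by (intro add_mono mult_left_mono) auto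
  also have "\<dots> = (p * exp (\<theta> * ln 2) + (1-p) * exp (- (\<theta> * \<delta>))) * E" by (simp add: algebra_simps)
  also have "\<dots> \<le> 1 * E" using F E0 unfolding \<delta>_def by (intro mult_right_mono) auto
  also have "\<dots> = U R \<theta> y" unfolding E_def U_def using True by simp
  finally show ?thesis .
qed

lemma ruin_somewhere_lt1:
  assumes p: "0 < p" "p < 1/2"
  shows "\<exists>x. ruin x p < 1"
proof -
  obtain \<theta> where th: "0 < \<theta>" and F: "p * exp (\<theta> * ln 2) + (1-p) * exp (- (\<theta> * (ln 2 / (2*(1-p))))) < 1"
    using exists_theta[OF p] by blast
  define R where "R = max 1 (1 / (2 - exp (ln 2 / (2*(1-p)))))"
  have R: "1 \<le> R" "1 / (2 - exp (ln 2 / (2*(1-p)))) \<le> R" unfolding R_def by auto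
  have R0: "0 < R" using R by simp
  have p1: "0 < p" "p < 1" using p by auto
  have N: "\<forall>x. ruinN x p N \<le> U R \<theta> (x - 1)" for N
  proof (induction N)
    case 0
    show ?case
    proof
      fix x :: real
      show "ruinN x p 0 \<le> U R \<theta> (x - 1)"
      proof (cases "x \<le> 0")
        case True then show ?thesis using R unfolding ruinN_0 U_def by simp
      next
        case False then show ?thesis unfolding ruinN_0 U_def by simp
      qed
    qed
  next
    case (Suc N)
    show ?case
    proof
      fix x :: real
      show "ruinN x p (Suc N) \<le> U R \<theta> (x - 1)"
      proof (cases "x \<le> 0")
        case True then show ?thesis using R unfolding ruinN_Suc[OF p1] U_def by simp
      next
        case False
        have "ruinN x p (Suc N) = p * ruinN ((x+1)/2) p N + (1-p) * ruinN (2*x-2) p N"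
          using False unfolding ruinN_Suc[OF p1] by simp
        also have "\<dots> \<le> p * U R \<theta> ((x+1)/2 - 1) + (1-p) * U R \<theta> (2*x-2 - 1)"
        proof -
          have h1: "ruinN ((x+1)/2) p N \<le> U R \<theta> ((x+1)/2 - 1)" using Suc.IH by blast
          have h2: "ruinN (2*x-2) p N \<le> U R \<theta> (2*x-2 - 1)" using Suc.IH by blast
          show ?thesis using h1 h2 p by (intro add_mono mult_left_mono) auto
        qed
        also have "(x+1)/2 - 1 = (x - 1)/2" by (simp add: field_simps)
        also have "2*x-2 - 1 = 2*(x-1) - 1" by simp
        also have "p * U R \<theta> ((x - 1)/2) + (1-p) * U R \<theta> (2*(x-1) - 1) \<le> U R \<theta> (x - 1)"
          using False by (intro U_super[OF p th F R]) simp
        finally show ?thesis .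
      qed
    qed
  qed
  define x0 where "x0 = 1 + 2*R"
  have "ruin x0 p \<le> U R \<theta> (x0 - 1)"
    using ruinN_lim N by (intro LIMSEQ_le_const2[of "\<lambda>N. ruinN x0 p N"]) auto
  also have "U R \<theta> (x0 - 1) = exp (\<theta> * (ln R - ln (2*R)))" unfolding U_def x0_def using R0 by simp
  also have "\<dots> = exp (- (\<theta> * ln 2))" using R0 by (simp add: ln_mult algebra_simps)
  also have "\<dots> < 1" using th by simp
  finally show ?thesis by blast
qed

lemma setup_p:
  assumes p: "0 < p" "p < 1/2"
  shows "hsetup (\<lambda>s. 1 - ruin (2+s) p) p"
proof -
  have p1: "0 < p" "p < 1" using p by auto
  show ?thesis
  proof (unfold_locales)
    show "0 < p" "p < 1/2" using p by auto
    show "1 - ruin (2+a) p \<le> 1 - ruin (2+b) p" if "a \<le> b" for a b using ruin_le[of "2+a" "2+b" p] that by simp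
    show "0 \<le> 1 - ruin (2+x) p" "1 - ruin (2+x) p \<le> 1" for x using ruin_bounds[of "2+x" p] by auto
    show "1 - ruin (2+x) p = 0" if "x < 0" for x using ruin_below2[OF p1, of "2+x"] that by simp
    show "1 - ruin (2+s) p = (1-p) * (1 - ruin (2 + 2 * s) p) + p * (1 - ruin (2 + (s-1)/2) p)" for s
    proof (cases "s < 0")
      case True
      then show ?thesis using ruin_below2[OF p1, of "2+s"] ruin_below2[OF p1, of "2+2 * s"] ruin_below2[OF p1, of "2+(s-1)/2"]
        by simp
    next
      case False
      have a1: "(2+s+1)/2 = 2 + (s-1)/2" and a2: "2*(2+s)-2 = 2 + 2 * s" by (simp_all add: field_simps)
      have "ruin (2+s) p = p * ruin ((2+s+1)/2) p + (1-p) * ruin (2*(2+s)-2) p"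
        using False by (intro ruin_eq p1) simp
      then have r: "ruin (2+s) p = p * ruin (2 + (s-1)/2) p + (1-p) * ruin (2 + 2 * s) p" unfolding a1 a2 .
      show ?thesis by (subst r) (simp add: algebra_simps)
    qed
  qed
qed

lemma part1:
  "\<forall>p. 0 < p \<and> p < 1/2 \<longrightarrow> (\<forall>x\<ge>2. \<forall>h>0.
            0 < ruin x p - ruin (x + h) p \<and>
            ruin x p - ruin (x + h) p
              \<le> (2::real) / (1 - 2*p)^2 * (h powr ((1/2::real) * p^2) + h powr ((1/2::real) * (1 - 2*p)^3)))"
proof (intro allI impI conjI)
  fix p x h :: real
  assume p: "0 < p \<and> p < 1/2" and x: "2 \<le> x" and h: "0 < h"
  interpret hsetup "\<lambda>s. 1 - ruin (2+s) p" p using setup_p p by blast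
  obtain x1 where x1: "ruin x1 p < 1" using ruin_somewhere_lt1 p by blast
  have S: "0 < 1 - ruin (2 + (x1 - 2)) p" using x1 by simp
  have e: "ruin x p - ruin (x + h) p = (1 - ruin (2 + (x - 2 + h)) p) - (1 - ruin (2 + (x - 2)) p)" by simp
  have "(1 - ruin (2 + (x - 2)) p) < (1 - ruin (2 + (x - 2 + h)) p)"
    using G_pos_interval[OF S, of "x - 2" h] x h by simp
  then show "0 < ruin x p - ruin (x + h) p" unfolding e by simp
  have "ruin x p - ruin (x + h) p \<le> phi h" unfolding e using holder[OF h, of "x - 2"] by simp
  also have "\<dots> \<le> 2 / (1 - 2*p)^2 * (h powr (1/2 * p^2) + h powr (1/2 * (1 - 2*p)^3))"
    by (rule phi_bound[OF h])
  finally show "ruin x p - ruin (x + h) p \<le> 2 / (1 - 2*p)^2 * (h powr (1/2 * p^2) + h powr (1/2 * (1 - 2*p)^3))" .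
qed

theorem theorem1p5:
  shows "(\<exists>C>0. \<exists>\<beta>>0. \<forall>p. 0 < p \<and> p < 1/2 \<longrightarrow> (\<forall>x\<ge>2. \<forall>h>0.
            0 < ruin x p - ruin (x + h) p \<and>
            ruin x p - ruin (x + h) p
              \<le> C / (1 - 2*p)^2 * (h powr (\<beta> * p^2) + h powr (\<beta> * (1 - 2*p)^3))))
       \<and> (\<forall>p. 0 < p \<and> p < 1/2 \<longrightarrow>
            ((\<lambda>x. ln (ruin 2 p - ruin x p) / ln (x - 2)) \<longlongrightarrow> log (1/2) (1 - p)) (at_right 2))"
proof (intro conjI)
  show "\<exists>C>0. \<exists>\<beta>>0. \<forall>p. 0 < p \<and> p < 1/2 \<longrightarrow> (\<forall>x\<ge>2. \<forall>h>0.
            0 < ruin x p - ruin (x + h) p \<and>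
            ruin x p - ruin (x + h) p
              \<le> C / (1 - 2*p)^2 * (h powr (\<beta> * p^2) + h powr (\<beta> * (1 - 2*p)^3)))"
    using part1 by (intro exI[where x="2::real"] exI[where x="1/2::real"] conjI) auto
  show "\<forall>p. 0 < p \<and> p < 1/2 \<longrightarrow>
            ((\<lambda>x. ln (ruin 2 p - ruin x p) / ln (x - 2)) \<longlongrightarrow> log (1/2) (1 - p)) (at_right 2)"
  proof (intro allI impI)
    fix p :: real
    assume p: "0 < p \<and> p < 1/2"
    interpret hsetup "\<lambda>s. 1 - ruin (2+s) p" p using setup_p p by blast
    obtain x1 where x1: "ruin x1 p < 1" using ruin_somewhere_lt1 p by blast
    have S: "0 < 1 - ruin (2 + (x1 - 2)) p" using x1 by simp
    have c0: "0 < 1 - ruin (2 + 1/2) p" using G_pos_all[OF S, of "1/2"] by simp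
    have r2: "ruin 2 p = 1" using ruin_below2[of p 2] p by simp
    have L: "((\<lambda>s. ln (1 - ruin (2+s) p) / ln s) \<longlongrightarrow> log (1/2) (1 - p)) (at_right 0)"
      by (rule loglim) (use c0 in simp)
    have eqf: "(\<lambda>x. ln (ruin 2 p - ruin (x + 2) p) / ln (x + 2 - 2)) = (\<lambda>s. ln (1 - ruin (2+s) p) / ln s)"
      using r2 by (auto simp: add.commute)
    show "((\<lambda>x. ln (ruin 2 p - ruin x p) / ln (x - 2)) \<longlongrightarrow> log (1/2) (1 - p)) (at_right 2)"
      unfolding filterlim_at_right_to_0[where a=2] eqf using L .
  qed
qed


end
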